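(* Let $S$ be a numerical semigroup and $G=G(S)=(V,E)$ its associated graph. Let $v_1\ne v_2\in V$ and suppose $v_2-v_1\in S$. Then $\deg(v_1)>\deg(v_2)$.
   Context: A numerical semigroup is a subset $S\subseteq\mathbb N$ containing $0$, closed under addition, with finite complement; $S^*=S\setminus\{0\}$, $m=\min S^*$, $X=\{s\in S^*: s-m\notin S\}$. The graph $G(S)$ has edge set all subsets $\{x,y\}\subseteq X$ ($x=y$ allowed) with $x+y\in X$, and vertex set $V$ the endvertices of these edges. For $x\in V$, $N_G(x)=\{y\in X: x+y\in X\}$ (which contains $x$ if $2x\in X$) and $\deg(x)=|N_G(x)|$. *)

theory Defs
  imports Main
begin

definition numerical_semigroup :: "nat set \<Rightarrow> bool" where
  "numerical_semigroup S \<longleftrightarrow> 0 \<in> S \<and> (\<forall>x\<in>S. \<forall>y\<in>S. x + y \<in> S) \<and> finite (UNIV - S)"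

definition multiplicity_ns :: "nat set \<Rightarrow> nat" where
  "multiplicity_ns S = Min (S - {0})"

text \<open>X = {s in S*. s - m not in S}  (s \<ge> m for all s in S*, so nat subtraction is exact)\<close>
definition X_set :: "nat set \<Rightarrow> nat set" where
  "X_set S = {s \<in> S - {0}. s - multiplicity_ns S \<notin> S}"

definition G_edges :: "nat set \<Rightarrow> nat set set" where
  "G_edges S = {{x, y} | x y. x \<in> X_set S \<and> y \<in> X_set S \<and> x + y \<in> X_set S}"

definition G_vertices :: "nat set \<Rightarrow> nat set" where
  "G_vertices S = \<Union> (G_edges S)"

definition G_nbhd :: "nat set \<Rightarrow> nat \<Rightarrow> nat set" where
  "G_nbhd S x = {y \<in> X_set S. x + y \<in> X_set S}"

definition G_deg :: "nat set \<Rightarrow> nat \<Rightarrow> nat" where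
  "G_deg S x = card (G_nbhd S x)"

end

theory Submission
  imports Defs
begin

lemma X_iff: "s \<in> X_set S \<longleftrightarrow> s \<in> S \<and> s \<noteq> 0 \<and> s - multiplicity_ns S \<notin> S"
  by (simp add: X_set_def)

lemma X_down:
  assumes ns: "numerical_semigroup S" and a: "b + c \<in> X_set S" and b: "b \<in> S" "b > multiplicity_ns S"
    and c: "c \<in> S"
  shows "b \<in> X_set S"
proof -
  let ?m = "multiplicity_ns S"
  have cl: "\<forall>x\<in>S. \<forall>y\<in>S. x + y \<in> S" using ns by (simp add: numerical_semigroup_def)
  have "b - ?m \<notin> S"
  proof
    assume "b - ?m \<in> S"
    then have "(b - ?m) + c \<in> S" using cl c by blast
    moreover have "(b - ?m) + c = b + c - ?m" using b by simp
    ultimately show False using a by (simp add: X_iff)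
  qed
  then show ?thesis using b by (simp add: X_iff)
qed

lemma X_gt: "s \<in> X_set S \<Longrightarrow> numerical_semigroup S \<Longrightarrow> s > multiplicity_ns S"
  by (simp add: X_iff numerical_semigroup_def) (metis diff_is_0_eq not_less)

lemma X_fin: assumes "numerical_semigroup S" shows "finite (X_set S)"
proof -
  let ?m = "multiplicity_ns S"
  have "X_set S \<subseteq> {..?m} \<union> (\<lambda>g. g + ?m) ` (UNIV - S)"
  proof
    fix s assume s: "s \<in> X_set S"
    show "s \<in> {..?m} \<union> (\<lambda>g. g + ?m) ` (UNIV - S)"
    proof (cases "s \<le> ?m")
      case False
      then have "s = (s - ?m) + ?m" by simp
      moreover have "s - ?m \<in> UNIV - S" using s by (simp add: X_iff)
      ultimately show ?thesis by blast
    qed simp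
  qed
  moreover have "finite (UNIV - S)" using assms by (simp add: numerical_semigroup_def)
  ultimately show ?thesis by (meson finite_Un finite_atMost finite_imageI finite_subset)
qed

theorem proposition4p7:
  fixes S :: "nat set" and v1 v2 :: nat
  assumes "numerical_semigroup S"
    and "v1 \<in> G_vertices S" and "v2 \<in> G_vertices S"
    and "v1 \<noteq> v2"
    and "v1 \<le> v2" and "v2 - v1 \<in> S"
  shows "G_deg S v1 > G_deg S v2"
proof -
  note ns = assms(1)
  let ?m = "multiplicity_ns S"
  define d where "d = v2 - v1"
  have v2eq: "v2 = v1 + d" using assms(5) d_def by simp
  have dS: "d \<in> S" using assms(6) d_def by simp
  have d0: "d > 0" using assms(4,5) d_def by simp
  have cl: "\<forall>x\<in>S. \<forall>y\<in>S. x + y \<in> S" using ns by (simp add: numerical_semigroup_def)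
  have vX: "v \<in> X_set S" if "v \<in> G_vertices S" for v
    using that unfolding G_vertices_def G_edges_def by auto
  have v1S: "v1 \<in> S" using vX[OF assms(2)] by (simp add: X_iff)
  have ne: "G_nbhd S v2 \<noteq> {}"
  proof -
    from assms(3) obtain x y where "v2 \<in> {x, y}" "x \<in> X_set S" "y \<in> X_set S" "x + y \<in> X_set S"
      unfolding G_vertices_def G_edges_def by auto
    then show ?thesis unfolding G_nbhd_def by (auto simp: add.commute)
  qed
  have fin1: "finite (G_nbhd S v1)" using X_fin[OF ns] unfolding G_nbhd_def by simp
  have fin2: "finite (G_nbhd S v2)" using X_fin[OF ns] unfolding G_nbhd_def by simp
  have sub: "G_nbhd S v2 \<subseteq> G_nbhd S v1"
  proof
    fix y assume y: "y \<in> G_nbhd S v2"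
    then have yX: "y \<in> X_set S" and a: "v1 + y + d \<in> X_set S"
      unfolding G_nbhd_def using v2eq by (auto simp: ac_simps)
    have "y \<in> S" using yX by (simp add: X_iff)
    then have "v1 + y \<in> S" using cl v1S by blast
    moreover have "v1 + y > ?m" using X_gt[OF yX ns] by simp
    ultimately have "v1 + y \<in> X_set S" using X_down[OF ns a _ _ dS] by blast
    then show "y \<in> G_nbhd S v1" using yX unfolding G_nbhd_def by simp
  qed
  define M where "M = Max (G_nbhd S v2)"
  have MN: "M \<in> G_nbhd S v2" using ne fin2 M_def by simp
  have MX: "M \<in> X_set S" and a: "M + d + v1 \<in> X_set S"
    using MN v2eq unfolding G_nbhd_def by (auto simp: ac_simps)
  have "M \<in> S" using MX by (simp add: X_iff)
  then have "M + d \<in> S" using cl dS by blast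
  moreover have "M + d > ?m" using X_gt[OF MX ns] by simp
  ultimately have "M + d \<in> X_set S" using X_down[OF ns a _ _ v1S] by blast
  moreover have "v1 + (M + d) \<in> X_set S" using a by (simp add: ac_simps)
  ultimately have new: "M + d \<in> G_nbhd S v1" unfolding G_nbhd_def by simp
  have notin: "M + d \<notin> G_nbhd S v2"
  proof
    assume "M + d \<in> G_nbhd S v2"
    then have "M + d \<le> M" using fin2 M_def Max_ge by blast
    then show False using d0 by simp
  qed
  have "insert (M + d) (G_nbhd S v2) \<subseteq> G_nbhd S v1" using sub new by simp
  then have "card (insert (M + d) (G_nbhd S v2)) \<le> card (G_nbhd S v1)"
    using fin1 card_mono by blast
  then show ?thesis unfolding G_deg_def using notin fin2 by simp
qed

end
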